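(* For any $n\in\mathbb{N}$ the standing up map $T^n:\mathcal{B}_n\to\Omega$ is a bijection.
   Context: Let $\mathcal{B}$ be the set of $\sigma\in\{-1,+1\}^{\mathbb{Z}}$ for which there exist $a,b\in\mathbb{Z}$ with $\sigma_{a-i}=-1$ and $\sigma_{b+i}=+1$ for all $i\in\mathbb{N}$. For $\sigma\in\mathcal{B}$ let $N(\sigma)=\#\{i\geq1:\sigma_i=-1\}-\#\{i\leq 0:\sigma_i=+1\}$, and $\mathcal{B}_n=\{\sigma\in\mathcal{B}:N(\sigma)=n\}$. Let $\Omega=\{\omega\in\mathbb{Z}_{\geq 0}^{\mathbb{Z}_{<0}} : \exists N>0 \text{ such that } \omega_{-i}=0\ \forall i\geq N\}$. For $\sigma\in\mathcal{B}_n$ let $S_r(\sigma)$ be the site of the $r$-th positive spin of $\sigma$ counted from the left. The standing up map is $T^n(\sigma)=\omega$ with $\omega_{-r}=S_{r+1}(\sigma)-S_r(\sigma)-1$ for $r\in\mathbb{Z}_{>0}$, i.e. $\omega_{-r}$ is the number of negative spins between the $r$-th and $(r+1)$-th positive spins. *)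

theory Defs
  imports Main
begin

definition Bconf :: "(int \<Rightarrow> int) set" where
  "Bconf = {\<sigma>. (\<forall>i. \<sigma> i = -1 \<or> \<sigma> i = 1) \<and>
      (\<exists>a b::int. \<forall>i::nat. \<sigma> (a - int i) = -1 \<and> \<sigma> (b + int i) = 1)}"

definition Ncharge :: "(int \<Rightarrow> int) \<Rightarrow> int" where
  "Ncharge \<sigma> = int (card {i::int. i \<ge> 1 \<and> \<sigma> i = -1}) - int (card {i::int. i \<le> 0 \<and> \<sigma> i = 1})"

definition Bn :: "int \<Rightarrow> (int \<Rightarrow> int) set" where
  "Bn n = {\<sigma> \<in> Bconf. Ncharge \<sigma> = n}"

text \<open>Omega: nonnegative integer sequences indexed by the negative integers, eventually zero
  (as index goes to minus infinity). Represented as int => nat with the convention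
  that the (meaningless) values at indices >= 0 are 0.\<close>
definition Omega :: "(int \<Rightarrow> nat) set" where
  "Omega = {\<omega>. (\<forall>i\<ge>0. \<omega> i = 0) \<and> (\<exists>N>0. \<forall>i\<ge>N. \<omega> (- i) = 0)}"

definition Spos :: "(int \<Rightarrow> int) \<Rightarrow> nat \<Rightarrow> int" where
  "Spos \<sigma> r = (THE s. \<sigma> s = 1 \<and> card {j. j < s \<and> \<sigma> j = 1} = r - 1)"

text \<open>Standing up map T^n (its formula does not depend on n; n only fixes the domain Bn n).\<close>
definition standup :: "(int \<Rightarrow> int) \<Rightarrow> (int \<Rightarrow> nat)" where
  "standup \<sigma> = (\<lambda>i. if i < 0 then nat (Spos \<sigma> (nat (- i) + 1) - Spos \<sigma> (nat (- i)) - 1) else 0)"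

end

theory Submission
  imports Defs
begin

definition enum :: "(int \<Rightarrow> int) \<Rightarrow> (nat \<Rightarrow> int) \<Rightarrow> bool" where
  "enum \<sigma> S \<longleftrightarrow> strict_mono S \<and> (\<forall>r\<ge>1. \<sigma> (S r) = 1) \<and> (\<forall>s. \<sigma> s = 1 \<longrightarrow> (\<exists>r\<ge>1. s = S r))"

definition nxt :: "(int \<Rightarrow> int) \<Rightarrow> int \<Rightarrow> int" where
  "nxt \<sigma> x = x + 1 + int (LEAST k::nat. \<sigma> (x + 1 + int k) = 1)"

primrec enumS :: "(int \<Rightarrow> int) \<Rightarrow> int \<Rightarrow> nat \<Rightarrow> int" where
  "enumS \<sigma> a 0 = a"
| "enumS \<sigma> a (Suc r) = nxt \<sigma> (enumS \<sigma> a r)"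

lemma smono_add: "strict_mono (S::nat\<Rightarrow>int) \<Longrightarrow> S m + int k \<le> S (m + k)"
proof (induction k)
  case 0 then show ?case by simp
next
  case (Suc k)
  have "S (m+k) < S (m + Suc k)" using Suc.prems by (simp add: strict_mono_less)
  then show ?case using Suc by simp
qed

lemma enum_below:
  assumes "enum \<sigma> S"
  shows "{j. j < S k \<and> \<sigma> j = 1} = S ` {1..<k}"
proof -
  have sm: "strict_mono S" and pos: "\<forall>r\<ge>1. \<sigma> (S r) = 1"
    and cov: "\<forall>s. \<sigma> s = 1 \<longrightarrow> (\<exists>r\<ge>1. s = S r)" using assms unfolding enum_def by auto
  show ?thesis
  proof
    show "{j. j < S k \<and> \<sigma> j = 1} \<subseteq> S ` {1..<k}"
    proof
      fix j assume "j \<in> {j. j < S k \<and> \<sigma> j = 1}"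
      then obtain q where "q\<ge>1" "j = S q" "S q < S k" using cov by auto
      then show "j \<in> S ` {1..<k}" using sm by (auto simp: strict_mono_less)
    qed
    show "S ` {1..<k} \<subseteq> {j. j < S k \<and> \<sigma> j = 1}" using sm pos by (auto simp: strict_mono_less)
  qed
qed

lemma enum_card:
  assumes "enum \<sigma> S"
  shows "card {j. j < S k \<and> \<sigma> j = 1} = k - 1"
proof -
  have sm: "strict_mono S" using assms unfolding enum_def by auto
  have "inj_on S {1..<k}" using strict_mono_imp_inj_on[OF sm] by (meson inj_on_subset subset_UNIV)
  then show ?thesis using enum_below[OF assms] by (simp add: card_image)
qed

lemma Spos_enum:
  assumes "enum \<sigma> S" "r \<ge> 1"
  shows "Spos \<sigma> r = S r"
proof -
  have pos: "\<forall>r\<ge>1. \<sigma> (S r) = 1"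
    and cov: "\<forall>s. \<sigma> s = 1 \<longrightarrow> (\<exists>r\<ge>1. s = S r)" using assms unfolding enum_def by auto
  show ?thesis unfolding Spos_def
  proof (rule the_equality)
    show "\<sigma> (S r) = 1 \<and> card {j. j < S r \<and> \<sigma> j = 1} = r - 1"
      using pos assms(2) enum_card[OF assms(1)] by auto
    fix s assume h: "\<sigma> s = 1 \<and> card {j. j < s \<and> \<sigma> j = 1} = r - 1"
    then obtain q where q: "q \<ge> 1" "s = S q" using cov by auto
    with h enum_card[OF assms(1), of q] assms(2) have "q = r" by auto
    then show "s = S r" using q by simp
  qed
qed

lemma nxt_props:
  assumes "\<forall>s\<ge>b. \<sigma> s = 1"
  shows "\<sigma> (nxt \<sigma> x) = 1" "x < nxt \<sigma> x" "x < y \<Longrightarrow> y < nxt \<sigma> x \<Longrightarrow> \<sigma> y \<noteq> 1"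
proof -
  have ex: "\<exists>k::nat. \<sigma> (x+1+int k) = 1"
    using assms by (intro exI[of _ "nat (b - x)"]) auto
  show "\<sigma> (nxt \<sigma> x) = 1" unfolding nxt_def using LeastI_ex[OF ex] by simp
  show "x < nxt \<sigma> x" unfolding nxt_def by simp
  assume "x < y" "y < nxt \<sigma> x"
  then have "nat (y - x - 1) < (LEAST k::nat. \<sigma> (x + 1 + int k) = 1)" unfolding nxt_def by simp
  then have "\<sigma> (x + 1 + int (nat (y - x - 1))) \<noteq> 1" by (rule not_less_Least)
  then show "\<sigma> y \<noteq> 1" using \<open>x < y\<close> by simp
qed

lemma enum_exists:
  assumes a: "\<forall>s\<le>a. \<sigma> s \<noteq> 1" and b: "\<forall>s\<ge>b. \<sigma> s = 1"
  shows "enum \<sigma> (enumS \<sigma> a)"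
proof -
  let ?S = "enumS \<sigma> a"
  have sm: "strict_mono ?S"
    by (rule strict_mono_Suc_iff[THEN iffD2]) (simp add: nxt_props(2)[OF b])
  have pos: "\<forall>r\<ge>1. \<sigma> (?S r) = 1"
  proof (intro allI impI)
    fix r :: nat assume "r \<ge> 1"
    then obtain r' where "r = Suc r'" by (cases r) auto
    then show "\<sigma> (?S r) = 1" by (simp add: nxt_props(1)[OF b])
  qed
  have cov: "\<forall>s. \<sigma> s = 1 \<longrightarrow> (\<exists>r\<ge>1. s = ?S r)"
  proof (intro allI impI)
    fix s assume s: "\<sigma> s = 1"
    then have sa: "s > a" using a by (meson linorder_not_le)
    have claim: "s \<le> ?S m \<longrightarrow> (\<exists>r\<ge>1. s = ?S r)" for m
    proof (induction m)
      case 0 then show ?case using sa by simp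
    next
      case (Suc m)
      show ?case
      proof
        assume le: "s \<le> ?S (Suc m)"
        show "\<exists>r\<ge>1. s = ?S r"
        proof (cases "s \<le> ?S m")
          case True then show ?thesis using Suc by simp
        next
          case False
          have "\<not> s < ?S (Suc m)" using nxt_props(3)[OF b, of "?S m" s] False s by auto
          then have "s = ?S (Suc m)" using le by simp
          then show ?thesis by (intro exI[of _ "Suc m"]) simp
        qed
      qed
    qed
    have "?S 0 + int (nat (s - a)) \<le> ?S (0 + nat (s - a))" by (rule smono_add[OF sm])
    then have "s \<le> ?S (nat (s - a))" using sa by simp
    then show "\<exists>r\<ge>1. s = ?S r" using claim by blast
  qed
  show ?thesis unfolding enum_def using sm pos cov by blast
qed

lemma enum_gap:
  assumes "enum \<sigma> S" "\<forall>s\<ge>b. \<sigma> s = 1" "S r \<ge> b"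
  shows "S (Suc r) = S r + 1"
proof -
  have sm: "strict_mono S"
    and cov: "\<forall>s. \<sigma> s = 1 \<longrightarrow> (\<exists>r\<ge>1. s = S r)" using assms(1) unfolding enum_def by auto
  have "\<sigma> (S r + 1) = 1" using assms by auto
  then obtain j where j: "S r + 1 = S j" using cov by auto
  then have "r < j" using sm by (metis less_add_one strict_mono_less)
  then have "S (Suc r) \<le> S j" using sm by (simp add: strict_mono_less_eq)
  moreover have "S r < S (Suc r)" using sm by (simp add: strict_mono_less)
  ultimately show ?thesis using j by simp
qed

lemma charge:
  assumes e: "enum \<sigma> S" and pm: "\<forall>i. \<sigma> i = 1 \<or> \<sigma> i = -1" and K: "K \<ge> 1" "S K \<ge> 1"
    and top: "\<forall>s\<ge>S K. \<sigma> s = 1"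
  shows "Ncharge \<sigma> = S K - int K"
proof -
  define A where "A = {j. j < S K \<and> \<sigma> j = 1}"
  have cA: "card A = K - 1" unfolding A_def by (rule enum_card[OF e])
  have fA: "finite A" unfolding A_def enum_below[OF e] by simp
  define P0 where "P0 = {j\<in>A. j \<le> 0}"
  define P1 where "P1 = {j\<in>A. j \<ge> 1}"
  have P0eq: "{i. i \<le> 0 \<and> \<sigma> i = 1} = P0" using K by (auto simp: P0_def A_def)
  have AU: "A = P0 \<union> P1" unfolding P0_def P1_def by auto
  have "card P0 + card P1 = K - 1"
  proof -
    have "P0 \<inter> P1 = {}" unfolding P0_def P1_def by auto
    moreover have "finite P0" "finite P1" using fA unfolding P0_def P1_def by auto
    ultimately have "card A = card P0 + card P1" using AU card_Un_disjoint by metis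
    then show ?thesis using cA by simp
  qed
  have P1sub: "P1 \<subseteq> {1..<S K}" unfolding P1_def A_def by auto
  have N1: "{i. i \<ge> 1 \<and> \<sigma> i = -1} = {1..<S K} - P1"
  proof
    show "{i. i \<ge> 1 \<and> \<sigma> i = -1} \<subseteq> {1..<S K} - P1"
    proof
      fix i assume "i \<in> {i. i \<ge> 1 \<and> \<sigma> i = -1}"
      then have "i \<ge> 1" "\<sigma> i = -1" by auto
      then have "i < S K" using top by (metis linorder_not_le one_neq_neg_one)
      then show "i \<in> {1..<S K} - P1" using \<open>i \<ge> 1\<close> \<open>\<sigma> i = -1\<close> by (auto simp: P1_def A_def)
    qed
    show "{1..<S K} - P1 \<subseteq> {i. i \<ge> 1 \<and> \<sigma> i = -1}"
      using pm by (auto simp: P1_def A_def)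
  qed
  have fP1: "finite P1" using P1sub finite_subset by blast
  have cN: "card ({1..<S K} - P1) = nat (S K - 1) - card P1"
    using card_Diff_subset[OF fP1 P1sub] by simp
  have "card P1 \<le> nat (S K - 1)" using card_mono[OF _ P1sub] by simp
  then show ?thesis unfolding Ncharge_def N1 P0eq cN
    using \<open>card P0 + card P1 = K - 1\<close> K by linarith
qed

lemma Bconf_props:
  assumes "\<sigma> \<in> Bconf"
  shows "\<forall>i. \<sigma> i = 1 \<or> \<sigma> i = -1" "\<exists>a. \<forall>s\<le>a. \<sigma> s \<noteq> 1" "\<exists>b. \<forall>s\<ge>b. \<sigma> s = 1"
proof -
  show "\<forall>i. \<sigma> i = 1 \<or> \<sigma> i = -1" using assms unfolding Bconf_def by auto
  obtain a b where ab: "\<forall>i::nat. \<sigma> (a - int i) = -1 \<and> \<sigma> (b + int i) = 1"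
    using assms unfolding Bconf_def by auto
  have "\<forall>s\<le>a. \<sigma> s \<noteq> 1"
  proof (intro allI impI)
    fix s assume "s \<le> a"
    then have "s = a - int (nat (a - s))" by simp
    then show "\<sigma> s \<noteq> 1" using ab by (metis one_neq_neg_one)
  qed
  then show "\<exists>a. \<forall>s\<le>a. \<sigma> s \<noteq> 1" by blast
  have "\<forall>s\<ge>b. \<sigma> s = 1"
  proof (intro allI impI)
    fix s assume "s \<ge> b"
    then have "s = b + int (nat (s - b))" by simp
    then show "\<sigma> s = 1" using ab by metis
  qed
  then show "\<exists>b. \<forall>s\<ge>b. \<sigma> s = 1" by blast
qed


theorem lemma3p2:
  fixes n :: nat
  shows "bij_betw standup (Bn (int n)) Omega"
  unfolding bij_betw_def
proof (intro conjI)
  show "inj_on standup (Bn (int n))"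
  proof (rule inj_onI)
    fix \<sigma> \<tau> assume s: "\<sigma> \<in> Bn (int n)" and t: "\<tau> \<in> Bn (int n)" and eq: "standup \<sigma> = standup \<tau>"
    have sB: "\<sigma> \<in> Bconf" "Ncharge \<sigma> = int n" using s unfolding Bn_def by auto
    have tB: "\<tau> \<in> Bconf" "Ncharge \<tau> = int n" using t unfolding Bn_def by auto
    obtain a1 where a1: "\<forall>s\<le>a1. \<sigma> s \<noteq> 1" using Bconf_props(2)[OF sB(1)] by blast
    obtain b1 where b1: "\<forall>s\<ge>b1. \<sigma> s = 1" using Bconf_props(3)[OF sB(1)] by blast
    obtain a2 where a2: "\<forall>s\<le>a2. \<tau> s \<noteq> 1" using Bconf_props(2)[OF tB(1)] by blast
    obtain b2 where b2: "\<forall>s\<ge>b2. \<tau> s = 1" using Bconf_props(3)[OF tB(1)] by blast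
    define S1 where "S1 = enumS \<sigma> a1"
    define S2 where "S2 = enumS \<tau> a2"
    have e1: "enum \<sigma> S1" unfolding S1_def by (rule enum_exists[OF a1 b1])
    have e2: "enum \<tau> S2" unfolding S2_def by (rule enum_exists[OF a2 b2])
    have sm1: "strict_mono S1" using e1 unfolding enum_def by auto
    have sm2: "strict_mono S2" using e2 unfolding enum_def by auto
    have diff: "S1 (Suc r) - S1 r = S2 (Suc r) - S2 r" if r: "r \<ge> 1" for r
    proof -
      have "standup \<sigma> (- int r) = standup \<tau> (- int r)" using eq by simp
      then have "nat (S1 (r + 1) - S1 r - 1) = nat (S2 (r + 1) - S2 r - 1)"
        unfolding standup_def using r Spos_enum[OF e1] Spos_enum[OF e2] by simp
      moreover have "S1 r < S1 (r+1)" "S2 r < S2 (r+1)" using sm1 sm2 by (auto simp: strict_mono_less)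
      ultimately show ?thesis by simp
    qed
    have d: "S1 (Suc m) - S2 (Suc m) = S1 1 - S2 1" for m
    proof (induction m)
      case 0 then show ?case by simp
    next
      case (Suc m)
      then show ?case using diff[of "Suc m"] by simp
    qed
    define K where "K = nat (\<bar>a1\<bar> + \<bar>a2\<bar> + \<bar>b1\<bar> + \<bar>b2\<bar>) + 1"
    have "S1 0 + int K \<le> S1 (0 + K)" by (rule smono_add[OF sm1])
    moreover have "S1 0 = a1" unfolding S1_def by simp
    moreover have "int K = \<bar>a1\<bar> + \<bar>a2\<bar> + \<bar>b1\<bar> + \<bar>b2\<bar> + 1" unfolding K_def by simp
    ultimately have K1: "S1 K \<ge> b1" "S1 K \<ge> 1" by auto
    have "S2 0 + int K \<le> S2 (0 + K)" by (rule smono_add[OF sm2])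
    moreover have "S2 0 = a2" unfolding S2_def by simp
    moreover have "int K = \<bar>a1\<bar> + \<bar>a2\<bar> + \<bar>b1\<bar> + \<bar>b2\<bar> + 1" unfolding K_def by simp
    ultimately have K2: "S2 K \<ge> b2" "S2 K \<ge> 1" by auto
    have "Ncharge \<sigma> = S1 K - int K"
      by (rule charge[OF e1 Bconf_props(1)[OF sB(1)]]) (use K1 b1 in \<open>auto simp: K_def\<close>)
    moreover have "Ncharge \<tau> = S2 K - int K"
      by (rule charge[OF e2 Bconf_props(1)[OF tB(1)]]) (use K2 b2 in \<open>auto simp: K_def\<close>)
    ultimately have "S1 K = S2 K" using sB tB by simp
    moreover have "S1 K - S2 K = S1 1 - S2 1" using d[of "K - 1"] by (simp add: K_def)
    ultimately have S12: "S1 r = S2 r" if "r \<ge> 1" for r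
      using d[of "r - 1"] that by simp
    show "\<sigma> = \<tau>"
    proof
      fix s
      have p1: "\<forall>r\<ge>1. \<sigma> (S1 r) = 1" "\<forall>s. \<sigma> s = 1 \<longrightarrow> (\<exists>r\<ge>1. s = S1 r)"
        using e1 unfolding enum_def by auto
      have p2: "\<forall>r\<ge>1. \<tau> (S2 r) = 1" "\<forall>s. \<tau> s = 1 \<longrightarrow> (\<exists>r\<ge>1. s = S2 r)"
        using e2 unfolding enum_def by auto
      have "\<sigma> s = 1 \<longleftrightarrow> \<tau> s = 1"
      proof
        assume "\<sigma> s = 1"
        then obtain r where "r \<ge> 1" "s = S1 r" using p1 by blast
        then show "\<tau> s = 1" using p2 S12 by simp
      next
        assume "\<tau> s = 1"
        then obtain r where "r \<ge> 1" "s = S2 r" using p2 by blast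
        then show "\<sigma> s = 1" using p1 S12 by simp
      qed
      moreover have "\<sigma> s = 1 \<or> \<sigma> s = -1" "\<tau> s = 1 \<or> \<tau> s = -1"
        using Bconf_props(1)[OF sB(1)] Bconf_props(1)[OF tB(1)] by auto
      ultimately show "\<sigma> s = \<tau> s" by auto
    qed
  qed
  show "standup ` Bn (int n) = Omega"
  proof
    show "standup ` Bn (int n) \<subseteq> Omega"
    proof
      fix w assume "w \<in> standup ` Bn (int n)"
      then obtain \<sigma> where s: "\<sigma> \<in> Bn (int n)" and w: "w = standup \<sigma>" by auto
      have sB: "\<sigma> \<in> Bconf" using s unfolding Bn_def by auto
      obtain a where a: "\<forall>s\<le>a. \<sigma> s \<noteq> 1" using Bconf_props(2)[OF sB] by blast
      obtain b where b: "\<forall>s\<ge>b. \<sigma> s = 1" using Bconf_props(3)[OF sB] by blast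
      define S where "S = enumS \<sigma> a"
      have e: "enum \<sigma> S" unfolding S_def by (rule enum_exists[OF a b])
      have sm: "strict_mono S" using e unfolding enum_def by auto
      define K where "K = nat (b - a) + 1"
      have "S 0 + int K \<le> S (0 + K)" by (rule smono_add[OF sm])
      moreover have "S 0 = a" unfolding S_def by simp
      moreover have "int K = int (nat (b - a)) + 1" unfolding K_def by simp
      ultimately have Kb: "S K \<ge> b" by (auto split: if_splits)
      have "\<forall>i\<ge>int K. w (- i) = 0"
      proof (intro allI impI)
        fix i assume i: "i \<ge> int K"
        define r where "r = nat i"
        have r: "r \<ge> K" "r \<ge> 1" using i unfolding r_def K_def by (auto split: if_splits)
        have "S r \<ge> S K" using sm r by (simp add: strict_mono_less_eq)
        then have "S (Suc r) = S r + 1" using enum_gap[OF e b] Kb by simp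
        moreover have "nat (- (- i)) = r" using i unfolding r_def by simp
        moreover have "- i < 0" using i K_def by (simp split: if_splits)
        ultimately show "w (- i) = 0" unfolding w standup_def
          using Spos_enum[OF e] r by simp
      qed
      moreover have "\<forall>i\<ge>0. w i = 0" unfolding w standup_def by simp
      moreover have "int K > 0" unfolding K_def by simp
      ultimately show "w \<in> Omega" unfolding Omega_def by blast
    qed
    show "Omega \<subseteq> standup ` Bn (int n)"
    proof
      fix w assume w: "w \<in> Omega"
      then obtain N where N: "N > 0" "\<forall>i\<ge>N. w (- i) = 0" and w0: "\<forall>i\<ge>0. w i = 0"
        unfolding Omega_def by blast
      define K0 where "K0 = nat N"
      have K0: "K0 \<ge> 1" using N unfolding K0_def by simp
      define W where "W = (\<Sum>k\<in>{1..<K0}. int (w (- int k)))"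
      define c where "c = int n - W"
      define S where "S r = c + int r + (\<Sum>k\<in>{1..<r}. int (w (- int k)))" for r
      have Ssuc: "S (Suc r) = S r + 1 + (if r \<ge> 1 then int (w (- int r)) else 0)" for r
      proof (cases "r \<ge> 1")
        case True
        then show ?thesis unfolding S_def by (simp add: sum.atLeastLessThan_Suc)
      next
        case False
        then have "r = 0" by simp
        then show ?thesis unfolding S_def by simp
      qed
      have sm: "strict_mono S"
        by (rule strict_mono_Suc_iff[THEN iffD2]) (simp add: Ssuc)
      have Sge: "S r \<ge> c + int r" for r unfolding S_def by (simp add: sum_nonneg)
      define \<sigma> where "\<sigma> s = (if \<exists>r\<ge>1. s = S r then 1 else (-1::int))" for s
      have e: "enum \<sigma> S" unfolding enum_def \<sigma>_def using sm by auto
      have Sflat: "S (K0 + m) = S K0 + int m" for m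
      proof (induction m)
        case 0 then show ?case by simp
      next
        case (Suc m)
        have "w (- int (K0 + m)) = 0" using N(1) N(2)[rule_format, of "N + int m"] unfolding K0_def by (simp add: algebra_simps)
        then show ?case using Ssuc[of "K0 + m"] Suc K0 by simp
      qed
      have top: "\<sigma> s = 1" if "s \<ge> S K0" for s
      proof -
        have "s = S (K0 + nat (s - S K0))" using Sflat that by simp
        moreover have "K0 + nat (s - S K0) \<ge> 1" using K0 by simp
        ultimately have "\<exists>r\<ge>1. s = S r" by blast
        then show ?thesis unfolding \<sigma>_def by simp
      qed
      have low: "\<sigma> s = -1" if "s \<le> c" for s
      proof -
        have "\<forall>r\<ge>1. s \<noteq> S r"
        proof (intro allI impI)
          fix r :: nat assume "r \<ge> 1"
          then have "S r > c" using Sge[of r] by linarith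
          then show "s \<noteq> S r" using that by simp
        qed
        then show ?thesis unfolding \<sigma>_def by auto
      qed
      have pm: "\<forall>i. \<sigma> i = 1 \<or> \<sigma> i = -1" unfolding \<sigma>_def by auto
      have sBc: "\<sigma> \<in> Bconf" unfolding Bconf_def
        using pm low top by (intro CollectI conjI exI[of _ c] exI[of _ "S K0"]) auto
      define K where "K = K0 + nat (1 - S K0)"
      have SK: "S K = S K0 + int (nat (1 - S K0))" unfolding K_def by (rule Sflat)
      have "Ncharge \<sigma> = S K - int K"
      proof (rule charge[OF e pm])
        show "K \<ge> 1" using K0 K_def by simp
        show "S K \<ge> 1" using SK by simp
        show "\<forall>s\<ge>S K. \<sigma> s = 1" using top SK by simp
      qed
      also have "\<dots> = S K0 - int K0" using SK unfolding K_def by simp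
      also have "\<dots> = int n" unfolding S_def c_def W_def by simp
      finally have "\<sigma> \<in> Bn (int n)" using sBc unfolding Bn_def by simp
      moreover have "standup \<sigma> = w"
      proof
        fix i
        show "standup \<sigma> i = w i"
        proof (cases "i < 0")
          case True
          define r where "r = nat (- i)"
          have r: "r \<ge> 1" "i = - int r" using True unfolding r_def by auto
          have "standup \<sigma> i = nat (Spos \<sigma> (r + 1) - Spos \<sigma> r - 1)"
            unfolding standup_def using True r_def by simp
          also have "\<dots> = nat (S (r + 1) - S r - 1)"
            using Spos_enum[OF e, of r] Spos_enum[OF e, of "r+1"] r(1) by simp
          also have "\<dots> = w i" using Ssuc[of r] r by simp
          finally show ?thesis .
        next
          case False
          then show ?thesis unfolding standup_def using w0 by simp
        qed
      qed
      ultimately show "w \<in> standup ` Bn (int n)" by blast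
    qed
  qed
qed

end
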